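(* Let $u_{t-1}\in\mathbb{R}^m$ be fixed (measurable with respect to $\mathcal{F}_{t-1}$), let $w_t\in[-1,1]$ with $\mathrm{dist}(w_t,\{-1,0,1\})\ge\varepsilon$, and let $X_t\sim\mathcal{N}(0,\sigma^2I_m)$ be independent of $\mathcal{F}_{t-1}$. Define $U:=\{\|X_t\|_2\le C_{\sup}\sigma\sqrt{m\log N_0}\}$ and $\lambda:=\frac{C_\lambda}{C_{\sup}^2\sigma^2m\log N_0}$, where $C_{\sup}>0$ and $C_\lambda\in(0,c_{norm}/12)$. Let $\rho\in(0,1)$. Then there is a universal constant $C>0$ such that with $\beta:=\frac{Ce^{C_\lambda}\sigma m\log(N_0)}{\rho\varepsilon}$, $$\mathbb{E}\left[e^{\lambda\Delta\|u_t\|_2^2}\mathbb{1}_{q_t=0}\mathbb{1}_U\mathbb{1}_{\|u_{t-1}\|_2\ge\beta}\,\middle|\,\mathcal{F}_{t-1}\right]\le\rho.$$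
   Context: $q_t=\mathcal{Q}(w_t+X_t^Tu_{t-1}/\|X_t\|_2^2)$ with $\mathcal{Q}(z)=\arg\min_{p\in\{-1,0,1\}}|z-p|$, $u_t=u_{t-1}+(w_t-q_t)X_t$, and $\Delta\|u_t\|_2^2:=\|u_t\|_2^2-\|u_{t-1}\|_2^2=(w_t-q_t)^2\|X_t\|_2^2+2(w_t-q_t)\langle X_t,u_{t-1}\rangle$. $\mathcal{F}_{t-1}$ is the sigma-algebra generated by the first $t-1$ steps of this quantization iteration (started at $u_0=0$). $c_{norm}$ is the absolute constant in the Gaussian norm concentration inequality $\mathbb{P}(|\|g\|_2-\sqrt m|\ge a)\le 2e^{-c_{norm}a^2}$ for $g\sim\mathcal{N}(0,I_m)$, $a>0$. *)

theory Defs
  imports "HOL-Analysis.Analysis" "HOL-Probability.Probability"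
begin

text \<open>Vectors of \<open>\<real>^m\<close> are represented as functions \<open>nat \<Rightarrow> real\<close>; only the
  coordinates \<open>i < m\<close> matter.\<close>

definition vnorm :: "nat \<Rightarrow> (nat \<Rightarrow> real) \<Rightarrow> real" where
  "vnorm m x = sqrt (\<Sum>i<m. (x i)\<^sup>2)"

definition vinner :: "nat \<Rightarrow> (nat \<Rightarrow> real) \<Rightarrow> (nat \<Rightarrow> real) \<Rightarrow> real" where
  "vinner m x y = (\<Sum>i<m. x i * y i)"

definition gauss_vec :: "nat \<Rightarrow> real \<Rightarrow> (nat \<Rightarrow> real) measure" where
  "gauss_vec m \<sigma> = PiM {..<m} (\<lambda>_. density lborel (normal_density 0 \<sigma>))"

text \<open>Quantizer \<open>Q(z) = argmin_{p \<in> {-1,0,1}} |z - p|\<close> (ties broken towards 0).\<close>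
definition Q :: "real \<Rightarrow> real" where
  "Q z = (if z < -1/2 then -1 else if z \<le> 1/2 then 0 else 1)"

definition q_step :: "nat \<Rightarrow> real \<Rightarrow> (nat \<Rightarrow> real) \<Rightarrow> (nat \<Rightarrow> real) \<Rightarrow> real" where
  "q_step m w u X = Q (w + vinner m X u / (vnorm m X)\<^sup>2)"

text \<open>\<open>\<Delta>\<parallel>u_t\<parallel>\<^sup>2 = (w-q)\<^sup>2 \<parallel>X\<parallel>\<^sup>2 + 2 (w-q) \<langle>X,u\<rangle>\<close>.\<close>
definition delta_sq :: "nat \<Rightarrow> real \<Rightarrow> (nat \<Rightarrow> real) \<Rightarrow> (nat \<Rightarrow> real) \<Rightarrow> real" where
  "delta_sq m w u X =
     (w - q_step m w u X)\<^sup>2 * (vnorm m X)\<^sup>2 + 2 * (w - q_step m w u X) * vinner m X u"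

definition gauss_norm_conc :: "real \<Rightarrow> bool" where
  "gauss_norm_conc c \<longleftrightarrow> c > 0 \<and>
     (\<forall>m a. a > 0 \<longrightarrow>
        measure (gauss_vec m 1) {g \<in> space (gauss_vec m 1). \<bar>vnorm m g - sqrt (real m)\<bar> \<ge> a}
          \<le> 2 * exp (- c * a\<^sup>2))"

end

theory Submission
  imports Defs
begin


lemma meas2:
  assumes "case_prod f \<in> borel_measurable (borel \<Otimes>\<^sub>M borel)"
    "g \<in> M \<rightarrow>\<^sub>M borel" "h \<in> M \<rightarrow>\<^sub>M borel"
  shows "(\<lambda>x. f (g x) (h x) :: ennreal) \<in> borel_measurable M"
  using measurable_compose[OF measurable_Pair[OF assms(2,3)] assms(1)] by simp

lemma meas2l:
  assumes "case_prod f \<in> borel_measurable (borel \<Otimes>\<^sub>M borel)"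
  shows "case_prod f \<in> borel_measurable (lborel \<Otimes>\<^sub>M lborel)"
  using assms by (simp add: measurable_def space_pair_measure sets_pair_measure)

definition I2 :: "(real \<Rightarrow> real \<Rightarrow> ennreal) \<Rightarrow> ennreal" where
  "I2 f = (\<integral>\<^sup>+y. \<integral>\<^sup>+x. f x y \<partial>lborel \<partial>lborel)"

lemma I2_shearX:
  assumes "case_prod f \<in> borel_measurable (borel \<Otimes>\<^sub>M borel)"
  shows "I2 (\<lambda>x y. f (x + a*y) y) = I2 f"
proof -
  have "(\<integral>\<^sup>+x. f (x + a*y) y \<partial>lborel) = (\<integral>\<^sup>+x. f x y \<partial>lborel)" for y
  proof -
    have [measurable]: "(\<lambda>x. f x y) \<in> borel_measurable borel" by (rule meas2[OF assms]) measurable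
    show ?thesis
      using nn_integral_real_affine[of "\<lambda>x. f x y" 1 "a*y"] by (simp add: add.commute)
  qed
  then show ?thesis unfolding I2_def by simp
qed

lemma I2_swap:
  assumes "case_prod f \<in> borel_measurable (borel \<Otimes>\<^sub>M borel)"
  shows "I2 f = (\<integral>\<^sup>+x. \<integral>\<^sup>+y. f x y \<partial>lborel \<partial>lborel)"
  unfolding I2_def
  by (rule lborel_pair.Fubini') (rule meas2l[OF assms])

lemma I2_shearY:
  assumes "case_prod f \<in> borel_measurable (borel \<Otimes>\<^sub>M borel)"
  shows "I2 (\<lambda>x y. f x (y + b*x)) = I2 f"
proof -
  have "I2 (\<lambda>x y. f x (y + b*x)) = (\<integral>\<^sup>+x. \<integral>\<^sup>+y. f x (y + b*x) \<partial>lborel \<partial>lborel)"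
    by (rule I2_swap) (unfold split_beta', rule meas2[OF assms]; measurable)
  also have "\<dots> = (\<integral>\<^sup>+x. \<integral>\<^sup>+y. f x y \<partial>lborel \<partial>lborel)"
  proof -
    have "(\<integral>\<^sup>+y. f x (y + b*x) \<partial>lborel) = (\<integral>\<^sup>+y. f x y \<partial>lborel)" for x
    proof -
      have [measurable]: "(\<lambda>y. f x y) \<in> borel_measurable borel" by (rule meas2[OF assms]) measurable
      show ?thesis
        using nn_integral_real_affine[of "\<lambda>y. f x y" 1 "b*x"] by (simp add: add.commute)
    qed
    then show ?thesis by simp
  qed
  also have "\<dots> = I2 f" by (rule I2_swap[symmetric]) (rule assms)
  finally show ?thesis .
qed

lemma I2_neg:
  assumes "case_prod f \<in> borel_measurable (borel \<Otimes>\<^sub>M borel)"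
  shows "I2 (\<lambda>x y. f (-x) (-y)) = I2 f"
proof -
  have "(\<integral>\<^sup>+x. f (-x) (-y) \<partial>lborel) = (\<integral>\<^sup>+x. f x (-y) \<partial>lborel)" for y
  proof -
    have [measurable]: "(\<lambda>x. f x (-y)) \<in> borel_measurable borel" by (rule meas2[OF assms]) measurable
    show ?thesis
      using nn_integral_real_affine[of "\<lambda>x. f x (-y)" "-1" 0] by simp
  qed
  then have "I2 (\<lambda>x y. f (-x) (-y)) = (\<integral>\<^sup>+y. \<integral>\<^sup>+x. f x (-y) \<partial>lborel \<partial>lborel)"
    unfolding I2_def by simp
  also have "\<dots> = I2 f"
  proof -
    have [measurable]: "(\<lambda>y. \<integral>\<^sup>+x. f x y \<partial>lborel) \<in> borel_measurable borel"
    proof -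
      have "(\<lambda>(y,x). f x y) \<in> borel_measurable (lborel \<Otimes>\<^sub>M lborel)"
        using meas2l[of "\<lambda>y x. f x y"] meas2[OF assms, of snd _ fst] by (simp add: split_beta')
      from lborel.borel_measurable_nn_integral[OF this] show ?thesis
        by (simp add: measurable_def)
    qed
    show ?thesis unfolding I2_def
      using nn_integral_real_affine[of "\<lambda>y. \<integral>\<^sup>+x. f x y \<partial>lborel" "-1" 0] by simp
  qed
  finally show ?thesis .
qed


lemma meas2p:
  assumes "case_prod f \<in> borel_measurable (borel \<Otimes>\<^sub>M borel)"
    "case_prod g \<in> (borel \<Otimes>\<^sub>M borel) \<rightarrow>\<^sub>M (borel::real measure)"
    "case_prod h \<in> (borel \<Otimes>\<^sub>M borel) \<rightarrow>\<^sub>M (borel::real measure)"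
  shows "(\<lambda>(x::real,y::real). f (g x y) (h x y) :: ennreal) \<in> borel_measurable (borel \<Otimes>\<^sub>M borel)"
  using meas2[OF assms(1), of "case_prod g" _ "case_prod h"] assms(2,3) by (simp add: split_beta')

lemma I2_rot:
  assumes f: "case_prod f \<in> borel_measurable (borel \<Otimes>\<^sub>M borel)" and cs: "c^2 + s^2 = 1"
  shows "I2 (\<lambda>x y. f (c*x - s*y) (s*x + c*y)) = I2 f"
proof (cases "c = -1")
  case True
  then have "s = 0" using cs by simp
  then show ?thesis using I2_neg[OF f] True by simp
next
  case False
  from cs have "c \<ge> -1" by (metis abs_le_D2 abs_le_square_iff le_add_same_cancel1 power_one zero_le_power2 minus_le_iff abs_minus_cancel abs_one)
  with False have c1: "1 + c > 0" by simp
  define t where "t = s / (1 + c)"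
  define f1 where "f1 = (\<lambda>x y. f (x + (-t)*y) y)"
  define f2 where "f2 = (\<lambda>x y. f1 x (y + s*x))"
  define f3 where "f3 = (\<lambda>x y. f2 (x + (-t)*y) y)"
  have m1: "case_prod f1 \<in> borel_measurable (borel \<Otimes>\<^sub>M borel)"
    unfolding f1_def by (rule meas2p[OF f]) measurable
  have m2: "case_prod f2 \<in> borel_measurable (borel \<Otimes>\<^sub>M borel)"
    unfolding f2_def by (rule meas2p[OF m1]) measurable
  have "I2 f3 = I2 f2" unfolding f3_def by (rule I2_shearX[OF m2])
  also have "I2 f2 = I2 f1" unfolding f2_def by (rule I2_shearY[OF m1])
  also have "I2 f1 = I2 f" unfolding f1_def by (rule I2_shearX[OF f])
  finally have "I2 f3 = I2 f" .
  moreover have "f3 = (\<lambda>x y. f (c*x - s*y) (s*x + c*y))"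
  proof (intro ext)
    fix x y
    have ts: "t * s = 1 - c"
    proof -
      have "t * s*(1+c) = s^2" unfolding t_def using c1 by (simp add: power2_eq_square)
      also have "\<dots> = (1-c)*(1+c)" using cs by (simp add: algebra_simps power2_eq_square)
      finally show ?thesis using c1 by simp
    qed
    have tc: "t*(1+c) = s" unfolding t_def using c1 by simp
    have "x + - t * y + - t * (y + s * (x + - t * y)) = x*(1 - t * s) - y*(t*(2 - t * s))"
      by (simp add: algebra_simps)
    also have "\<dots> = x*c - y*(t*(1+c))" by (simp only: ts) (simp add: algebra_simps)
    also have "\<dots> = c*x - s*y" by (simp only: tc) (simp add: algebra_simps)
    finally have e1: "x + - t * y + - t * (y + s * (x + - t * y)) = c*x - s*y" .
    have e2: "y + s * (x + - t * y) = s*x + c*y"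
    proof -
      have "y + s * (x + - t * y) = s*x + y*(1 - t * s)" by (simp add: algebra_simps)
      also have "\<dots> = s*x + c*y" by (simp only: ts) (simp add: algebra_simps)
      finally show ?thesis .
    qed
    show "f3 x y = f (c*x - s*y) (s*x + c*y)" unfolding f3_def f2_def f1_def using e1 e2 by simp
  qed
  ultimately show ?thesis by simp
qed


abbreviation NN :: "real \<Rightarrow> real measure" where
  "NN \<sigma> \<equiv> density lborel (\<lambda>x. ennreal (normal_density 0 \<sigma> x))"

lemma gauss_vec_eq: "gauss_vec m \<sigma> = PiM {..<m} (\<lambda>_. NN \<sigma>)"
  unfolding gauss_vec_def ..

lemma NN_prob: "\<sigma> > 0 \<Longrightarrow> prob_space (NN \<sigma>)"
  by (rule prob_space_normal_density)

lemma sets_NN[simp, measurable_cong]: "sets (NN \<sigma>) = sets borel" by simp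

lemma NN_to_I2:
  assumes sig: "\<sigma> > 0" and F: "case_prod F \<in> borel_measurable (borel \<Otimes>\<^sub>M borel)"
  shows "(\<integral>\<^sup>+y. \<integral>\<^sup>+t. F t y \<partial>NN \<sigma> \<partial>NN \<sigma>)
     = I2 (\<lambda>t y. ennreal (normal_density 0 \<sigma> t * normal_density 0 \<sigma> y) * F t y)"
proof -
  interpret N: prob_space "NN \<sigma>" by (rule NN_prob[OF sig])
  have Fm: "(\<lambda>(y,t). F t y) \<in> borel_measurable (NN \<sigma> \<Otimes>\<^sub>M NN \<sigma>)"
  proof -
    have "(\<lambda>(y,t). F t y) \<in> borel_measurable (borel \<Otimes>\<^sub>M borel)"
      using meas2[OF F, of snd _ fst] by (simp add: split_beta')
    then show ?thesis by (simp add: measurable_def space_pair_measure sets_pair_measure)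
  qed
  have [measurable]: "(\<lambda>y. \<integral>\<^sup>+t. F t y \<partial>NN \<sigma>) \<in> borel_measurable borel"
    using N.borel_measurable_nn_integral[OF Fm] by (simp add: measurable_def)
  have Fy[measurable]: "(\<lambda>t. F t y) \<in> borel_measurable borel" for y
    by (rule meas2[OF F]) measurable
  have "(\<integral>\<^sup>+y. \<integral>\<^sup>+t. F t y \<partial>NN \<sigma> \<partial>NN \<sigma>)
     = (\<integral>\<^sup>+y. ennreal (normal_density 0 \<sigma> y) * (\<integral>\<^sup>+t. ennreal (normal_density 0 \<sigma> t) * F t y \<partial>lborel) \<partial>lborel)"
  proof -
    have "(\<integral>\<^sup>+y. \<integral>\<^sup>+t. F t y \<partial>NN \<sigma> \<partial>NN \<sigma>)
       = (\<integral>\<^sup>+y. ennreal (normal_density 0 \<sigma> y) * (\<integral>\<^sup>+t. F t y \<partial>NN \<sigma>) \<partial>lborel)"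
      by (rule nn_integral_density) simp_all
    also have "\<dots> = (\<integral>\<^sup>+y. ennreal (normal_density 0 \<sigma> y) * (\<integral>\<^sup>+t. ennreal (normal_density 0 \<sigma> t) * F t y \<partial>lborel) \<partial>lborel)"
      by (intro nn_integral_cong arg_cong2[where f="(*)"] refl nn_integral_density) simp_all
    finally show ?thesis .
  qed
  also have "\<dots> = (\<integral>\<^sup>+y. \<integral>\<^sup>+t. ennreal (normal_density 0 \<sigma> t * normal_density 0 \<sigma> y) * F t y \<partial>lborel \<partial>lborel)"
    by (intro nn_integral_cong, subst nn_integral_cmult[symmetric])
       (auto intro!: nn_integral_cong simp: ennreal_mult' mult_ac)
  finally show ?thesis unfolding I2_def .
qed


definition psi :: "real \<Rightarrow> real \<Rightarrow> real" where
  "psi \<sigma> r = 1 / (2*pi*\<sigma>^2) * exp (- r / (2*\<sigma>^2))"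

lemma nd_prod: "normal_density 0 \<sigma> t * normal_density 0 \<sigma> y = psi \<sigma> (t^2 + y^2)"
proof -
  have 1: "sqrt (2*pi*\<sigma>^2) * sqrt (2*pi*\<sigma>^2) = 2*pi*\<sigma>^2" by simp
  have 2: "exp (-(t^2)/(2*\<sigma>^2)) * exp (-(y^2)/(2*\<sigma>^2)) = exp (-(t^2+y^2)/(2*\<sigma>^2))"
    by (simp add: exp_add[symmetric] diff_divide_distrib)
  have "normal_density 0 \<sigma> t * normal_density 0 \<sigma> y
     = 1 / (sqrt (2*pi*\<sigma>^2) * sqrt (2*pi*\<sigma>^2)) * (exp (-(t^2)/(2*\<sigma>^2)) * exp (-(y^2)/(2*\<sigma>^2)))"
    unfolding normal_density_def by simp
  then show ?thesis unfolding 1 2 psi_def .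
qed

lemma gauss2:
  assumes sig: "\<sigma> > 0" and g: "case_prod g \<in> borel_measurable (borel \<Otimes>\<^sub>M borel)"
  shows "(\<integral>\<^sup>+y. \<integral>\<^sup>+t. g (\<alpha>*t + \<beta>*y) (t^2 + y^2) \<partial>NN \<sigma> \<partial>NN \<sigma>)
       = (\<integral>\<^sup>+y. \<integral>\<^sup>+t. g (sqrt (\<alpha>^2+\<beta>^2) * t) (t^2 + y^2) \<partial>NN \<sigma> \<partial>NN \<sigma>)"
proof (cases "\<alpha>^2+\<beta>^2 = 0")
  case True
  then have "\<alpha> = 0" "\<beta> = 0" by (auto simp: add_nonneg_eq_0_iff)
  then show ?thesis by simp
next
  case False
  define \<gamma> where "\<gamma> = sqrt (\<alpha>^2+\<beta>^2)"
  have gpos: "\<gamma> > 0" unfolding \<gamma>_def using False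
    by (simp add: add_nonneg_nonneg add_pos_nonneg order_le_neq_trans)
  have g2: "\<gamma>^2 = \<alpha>^2+\<beta>^2" unfolding \<gamma>_def by simp
  define c where "c = \<alpha>/\<gamma>"
  define s where "s = -\<beta>/\<gamma>"
  have "c^2 + s^2 = (\<alpha>^2+\<beta>^2)/\<gamma>^2" by (simp add: c_def s_def power_divide add_divide_distrib)
  then have cs: "c^2 + s^2 = 1" using gpos g2 False by simp
  define h where "h = (\<lambda>x y. ennreal (psi \<sigma> (x^2+y^2)) * g (\<gamma>*x) (x^2+y^2))"
  have hm: "case_prod h \<in> borel_measurable (borel \<Otimes>\<^sub>M borel)"
  proof -
    have "(\<lambda>(x,y). g (\<gamma>*x) (x^2+y^2)) \<in> borel_measurable (borel \<Otimes>\<^sub>M borel)"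
      by (rule meas2p[OF g]) measurable
    then show ?thesis unfolding h_def psi_def by measurable
  qed
  have m1: "case_prod (\<lambda>t y. g (\<alpha>*t + \<beta>*y) (t^2 + y^2)) \<in> borel_measurable (borel \<Otimes>\<^sub>M borel)"
    by (rule meas2p[OF g]) measurable
  have m2: "case_prod (\<lambda>t y. g (\<gamma>*t) (t^2 + y^2)) \<in> borel_measurable (borel \<Otimes>\<^sub>M borel)"
    by (rule meas2p[OF g]) measurable
  have rot: "h (c*t - s*y) (s*t + c*y) = ennreal (normal_density 0 \<sigma> t * normal_density 0 \<sigma> y) * g (\<alpha>*t + \<beta>*y) (t^2 + y^2)" for t y
  proof -
    have e1: "(c*t - s*y)^2 + (s*t + c*y)^2 = t^2 + y^2"
    proof -
      have "(c*t - s*y)^2 + (s*t + c*y)^2 = (c^2+s^2)*(t^2+y^2)" by (simp add: power2_eq_square algebra_simps)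
      then show ?thesis using cs by simp
    qed
    have gc: "\<gamma>*c = \<alpha>" "\<gamma>* s = -\<beta>" unfolding c_def s_def using gpos by simp_all
    have "\<gamma>*(c*t - s*y) = (\<gamma>*c)*t - (\<gamma>* s)*y" by (simp add: algebra_simps)
    then have e2: "\<gamma>*(c*t - s*y) = \<alpha>*t + \<beta>*y" unfolding gc by simp
    show ?thesis unfolding h_def e1 e2 nd_prod ..
  qed
  have "(\<integral>\<^sup>+y. \<integral>\<^sup>+t. g (\<alpha>*t + \<beta>*y) (t^2 + y^2) \<partial>NN \<sigma> \<partial>NN \<sigma>)
      = I2 (\<lambda>t y. h (c*t - s*y) (s*t + c*y))"
    unfolding NN_to_I2[OF sig m1] rot ..
  also have "\<dots> = I2 h" by (rule I2_rot[OF hm cs])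
  also have "\<dots> = (\<integral>\<^sup>+y. \<integral>\<^sup>+t. g (\<gamma>*t) (t^2 + y^2) \<partial>NN \<sigma> \<partial>NN \<sigma>)"
    unfolding NN_to_I2[OF sig m2] h_def nd_prod ..
  finally show ?thesis unfolding \<gamma>_def .
qed


definition Sq :: "nat \<Rightarrow> (nat \<Rightarrow> real) \<Rightarrow> real" where
  "Sq m x = (\<Sum>i<m. (x i)^2)"

lemma mV[measurable]: "(\<lambda>x. vinner m x u) \<in> borel_measurable (PiM {..<m} (\<lambda>_. NN \<sigma>))"
  unfolding vinner_def by measurable

lemma mSq[measurable]: "(\<lambda>x. Sq m x) \<in> borel_measurable (PiM {..<m} (\<lambda>_. NN \<sigma>))"
  unfolding Sq_def by measurable

lemma NN_refl:
  assumes [measurable]: "F \<in> borel_measurable borel"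
  shows "(\<integral>\<^sup>+t. F (-t) \<partial>NN \<sigma>) = (\<integral>\<^sup>+t. F t \<partial>NN \<sigma>)"
proof -
  have "(\<integral>\<^sup>+t. F (-t) \<partial>NN \<sigma>) = (\<integral>\<^sup>+t. ennreal (normal_density 0 \<sigma> t) * F (-t) \<partial>lborel)"
    by (simp add: nn_integral_density)
  also have "\<dots> = (\<integral>\<^sup>+t. ennreal (normal_density 0 \<sigma> (-t)) * F (-t) \<partial>lborel)"
    by (simp add: normal_density_def)
  also have "\<dots> = (\<integral>\<^sup>+t. ennreal (normal_density 0 \<sigma> t) * F t \<partial>lborel)"
    using nn_integral_real_affine[of "\<lambda>t. ennreal (normal_density 0 \<sigma> t) * F t" "-1" 0] by simp
  also have "\<dots> = (\<integral>\<^sup>+t. F t \<partial>NN \<sigma>)"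
    by (simp add: nn_integral_density)
  finally show ?thesis .
qed


lemma meas_int:
  assumes sig: "\<sigma> > 0" and g: "case_prod g \<in> borel_measurable (borel \<Otimes>\<^sub>M borel)"
    and [measurable]: "A \<in> borel_measurable M" "B \<in> borel_measurable M"
  shows "(\<lambda>z. \<integral>\<^sup>+t. g (c*t + A z) (t^2 + B z) \<partial>NN \<sigma>) \<in> borel_measurable M"
proof -
  interpret N: prob_space "NN \<sigma>" by (rule NN_prob[OF sig])
  have "(\<lambda>p. g (c * snd p + A (fst p)) ((snd p)^2 + B (fst p))) \<in> borel_measurable (M \<Otimes>\<^sub>M NN \<sigma>)"
    by (rule meas2[OF g]) measurable
  then have "case_prod (\<lambda>z t. g (c*t + A z) (t^2 + B z)) \<in> borel_measurable (M \<Otimes>\<^sub>M NN \<sigma>)"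
    by (simp add: split_beta')
  from N.borel_measurable_nn_integral[OF this] show ?thesis .
qed

lemma vinner_upd: "vinner m (x(m:=y)) u = vinner m x u"
  unfolding vinner_def by (intro sum.cong) auto

lemma Sq_upd: "Sq m (x(m:=y)) = Sq m x"
  unfolding Sq_def by (intro sum.cong) auto

lemma rotind:
  assumes sig: "\<sigma> > 0"
  shows "\<And>\<alpha> g. case_prod g \<in> borel_measurable (borel \<Otimes>\<^sub>M borel) \<Longrightarrow>
    (\<integral>\<^sup>+x. \<integral>\<^sup>+t. g (\<alpha>*t + vinner m x u) (t^2 + Sq m x) \<partial>NN \<sigma> \<partial>PiM {..<m} (\<lambda>_. NN \<sigma>))
  = (\<integral>\<^sup>+x. \<integral>\<^sup>+t. g (sqrt (\<alpha>^2 + Sq m u) * t) (t^2 + Sq m x) \<partial>NN \<sigma> \<partial>PiM {..<m} (\<lambda>_. NN \<sigma>))"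
proof (induction m)
  case (0 \<alpha> g)
  have gm[measurable]: "(\<lambda>t. g (c*t) (t^2)) \<in> borel_measurable borel" for c
    by (rule meas2[OF 0]) measurable
  have "(\<integral>\<^sup>+t. g (\<alpha>*t) (t^2) \<partial>NN \<sigma>) = (\<integral>\<^sup>+t. g (\<bar>\<alpha>\<bar>*t) (t^2) \<partial>NN \<sigma>)"
  proof (cases "\<alpha> \<ge> 0")
    case False
    then have "(\<integral>\<^sup>+t. g (\<bar>\<alpha>\<bar>*t) (t^2) \<partial>NN \<sigma>) = (\<integral>\<^sup>+t. g (\<alpha>*(-t)) ((-t)^2) \<partial>NN \<sigma>)"
      by simp
    also have "\<dots> = (\<integral>\<^sup>+t. g (\<alpha>*t) (t^2) \<partial>NN \<sigma>)"
      by (rule NN_refl[of "\<lambda>t. g (\<alpha>*t) (t^2)"]) measurable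
    finally show ?thesis ..
  qed simp
  then show ?case by (simp add: vinner_def Sq_def)
next
  case (Suc m \<alpha> g)
  note g = Suc.prems
  interpret P: product_prob_space "\<lambda>_::nat. NN \<sigma>"
    by (rule product_prob_spaceI) (rule NN_prob[OF sig])
  interpret N: prob_space "NN \<sigma>" by (rule NN_prob[OF sig])
  let ?G = "PiM {..<m} (\<lambda>_. NN \<sigma>)"
  interpret GN: pair_sigma_finite ?G "NN \<sigma>"
    by (intro pair_sigma_finite.intro prob_space_imp_sigma_finite prob_space_PiM NN_prob sig)
  define \<gamma>1 where "\<gamma>1 = sqrt (\<alpha>^2 + (u m)^2)"
  define \<gamma> where "\<gamma> = sqrt (\<alpha>^2 + Sq (Suc m) u)"
  have \<gamma>eq: "\<gamma> = sqrt (\<gamma>1^2 + Sq m u)"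
    unfolding \<gamma>_def \<gamma>1_def Sq_def by (simp add: add.assoc add.commute)
  have ins: "{..<Suc m} = insert m {..<m}" by auto
  have V: "vinner (Suc m) (x(m:=y)) u = vinner m x u + u m * y" for x y
    using vinner_upd[of m x y u] unfolding vinner_def by simp
  have S: "Sq (Suc m) (x(m:=y)) = Sq m x + y^2" for x y
    using Sq_upd[of m x y] unfolding Sq_def by simp
  have m1: "(\<lambda>x. \<integral>\<^sup>+t. g (\<alpha>*t + vinner (Suc m) x u) (t^2 + Sq (Suc m) x) \<partial>NN \<sigma>)
      \<in> borel_measurable (PiM (insert m {..<m}) (\<lambda>_. NN \<sigma>))"
    unfolding ins[symmetric] by (rule meas_int[OF sig g]) measurable
  have m2: "(\<lambda>x. \<integral>\<^sup>+t. g (\<gamma>*t + 0) (t^2 + Sq (Suc m) x) \<partial>NN \<sigma>)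
      \<in> borel_measurable (PiM (insert m {..<m}) (\<lambda>_. NN \<sigma>))"
    unfolding ins[symmetric] by (rule meas_int[OF sig g]) measurable
  have "(\<integral>\<^sup>+x. \<integral>\<^sup>+t. g (\<alpha>*t + vinner (Suc m) x u) (t^2 + Sq (Suc m) x) \<partial>NN \<sigma> \<partial>PiM {..<Suc m} (\<lambda>_. NN \<sigma>))
     = (\<integral>\<^sup>+x. \<integral>\<^sup>+y. \<integral>\<^sup>+t. g (\<alpha>*t + u m * y + vinner m x u) (t^2 + y^2 + Sq m x) \<partial>NN \<sigma> \<partial>NN \<sigma> \<partial>?G)"
    unfolding ins P.product_nn_integral_insert[OF _ _ m1, simplified] V S
    by (simp add: algebra_simps)
  also have "\<dots> = (\<integral>\<^sup>+x. \<integral>\<^sup>+y. \<integral>\<^sup>+t. g (\<gamma>1*t + vinner m x u) (t^2 + (Sq m x + y^2)) \<partial>NN \<sigma> \<partial>NN \<sigma> \<partial>?G)"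
  proof (rule nn_integral_cong)
    fix x assume "x \<in> space ?G"
    let ?gx = "\<lambda>a b. g (a + vinner m x u) (b + Sq m x)"
    have gx: "case_prod ?gx \<in> borel_measurable (borel \<Otimes>\<^sub>M borel)"
      by (rule meas2p[OF g]) measurable
    show "(\<integral>\<^sup>+y. \<integral>\<^sup>+t. g (\<alpha>*t + u m * y + vinner m x u) (t^2 + y^2 + Sq m x) \<partial>NN \<sigma> \<partial>NN \<sigma>)
       = (\<integral>\<^sup>+y. \<integral>\<^sup>+t. g (\<gamma>1*t + vinner m x u) (t^2 + (Sq m x + y^2)) \<partial>NN \<sigma> \<partial>NN \<sigma>)"
      using gauss2[OF sig gx, of \<alpha> "u m"] unfolding \<gamma>1_def by (simp add: algebra_simps)
  qed
  also have "\<dots> = (\<integral>\<^sup>+y. \<integral>\<^sup>+x. \<integral>\<^sup>+t. g (\<gamma>1*t + vinner m x u) (t^2 + (Sq m x + y^2)) \<partial>NN \<sigma> \<partial>?G \<partial>NN \<sigma>)"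
  proof (rule GN.Fubini'[symmetric])
    show "case_prod (\<lambda>x y. \<integral>\<^sup>+t. g (\<gamma>1*t + vinner m x u) (t^2 + (Sq m x + y^2)) \<partial>NN \<sigma>) \<in> borel_measurable (?G \<Otimes>\<^sub>M NN \<sigma>)"
      unfolding split_beta' by (rule meas_int[OF sig g]) measurable
  qed
  also have "\<dots> = (\<integral>\<^sup>+y. \<integral>\<^sup>+x. \<integral>\<^sup>+t. g (\<gamma>*t + 0) (t^2 + (Sq m x + y^2)) \<partial>NN \<sigma> \<partial>?G \<partial>NN \<sigma>)"
  proof (rule nn_integral_cong)
    fix y assume "y \<in> space (NN \<sigma>)"
    let ?gy = "\<lambda>a b. g a (b + y^2)"
    have gy: "case_prod ?gy \<in> borel_measurable (borel \<Otimes>\<^sub>M borel)"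
      by (rule meas2p[OF g]) measurable
    show "(\<integral>\<^sup>+x. \<integral>\<^sup>+t. g (\<gamma>1*t + vinner m x u) (t^2 + (Sq m x + y^2)) \<partial>NN \<sigma> \<partial>?G)
       = (\<integral>\<^sup>+x. \<integral>\<^sup>+t. g (\<gamma>*t + 0) (t^2 + (Sq m x + y^2)) \<partial>NN \<sigma> \<partial>?G)"
      using Suc.IH[OF gy, of \<gamma>1] unfolding \<gamma>eq by (simp add: add.assoc)
  qed
  also have "\<dots> = (\<integral>\<^sup>+x. \<integral>\<^sup>+y. \<integral>\<^sup>+t. g (\<gamma>*t + 0) (t^2 + (Sq m x + y^2)) \<partial>NN \<sigma> \<partial>NN \<sigma> \<partial>?G)"
  proof (rule GN.Fubini')
    show "case_prod (\<lambda>x y. \<integral>\<^sup>+t. g (\<gamma>*t + 0) (t^2 + (Sq m x + y^2)) \<partial>NN \<sigma>) \<in> borel_measurable (?G \<Otimes>\<^sub>M NN \<sigma>)"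
      unfolding split_beta' by (rule meas_int[OF sig g]) measurable
  qed
  also have "\<dots> = (\<integral>\<^sup>+x. \<integral>\<^sup>+t. g (\<gamma>*t + 0) (t^2 + Sq (Suc m) x) \<partial>NN \<sigma> \<partial>PiM {..<Suc m} (\<lambda>_. NN \<sigma>))"
    unfolding ins by (subst P.product_nn_integral_insert[OF _ _ m2]) (simp_all add: S)
  finally show ?case unfolding \<gamma>_def by simp
qed


lemma rot_final:
  assumes sig: "\<sigma> > 0" and g: "case_prod g \<in> borel_measurable (borel \<Otimes>\<^sub>M borel)"
  shows "(\<integral>\<^sup>+x. g (vinner (Suc k) x u) (Sq (Suc k) x) \<partial>PiM {..<Suc k} (\<lambda>_. NN \<sigma>))
     = (\<integral>\<^sup>+x. \<integral>\<^sup>+t. g (sqrt (Sq (Suc k) u) * t) (t^2 + Sq k x) \<partial>NN \<sigma> \<partial>PiM {..<k} (\<lambda>_. NN \<sigma>))"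
proof -
  interpret P: product_prob_space "\<lambda>_::nat. NN \<sigma>"
    by (rule product_prob_spaceI) (rule NN_prob[OF sig])
  have ins: "{..<Suc k} = insert k {..<k}" by auto
  have V: "vinner (Suc k) (x(k:=y)) u = u k * y + vinner k x u" for x y
    using vinner_upd[of k x y u] unfolding vinner_def by simp
  have S: "Sq (Suc k) (x(k:=y)) = y^2 + Sq k x" for x y
    using Sq_upd[of k x y] unfolding Sq_def by simp
  have m1: "(\<lambda>x. g (vinner (Suc k) x u) (Sq (Suc k) x)) \<in> borel_measurable (PiM (insert k {..<k}) (\<lambda>_. NN \<sigma>))"
    unfolding ins[symmetric] by (rule meas2[OF g]) measurable
  have "(\<integral>\<^sup>+x. g (vinner (Suc k) x u) (Sq (Suc k) x) \<partial>PiM {..<Suc k} (\<lambda>_. NN \<sigma>))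
      = (\<integral>\<^sup>+x. \<integral>\<^sup>+t. g (u k * t + vinner k x u) (t^2 + Sq k x) \<partial>NN \<sigma> \<partial>PiM {..<k} (\<lambda>_. NN \<sigma>))"
    unfolding ins by (subst P.product_nn_integral_insert[OF _ _ m1]) (simp_all add: V S)
  also have "\<dots> = (\<integral>\<^sup>+x. \<integral>\<^sup>+t. g (sqrt ((u k)^2 + Sq k u) * t) (t^2 + Sq k x) \<partial>NN \<sigma> \<partial>PiM {..<k} (\<lambda>_. NN \<sigma>))"
    by (rule rotind[OF sig g])
  also have "(u k)^2 + Sq k u = Sq (Suc k) u" unfolding Sq_def by simp
  finally show ?thesis .
qed

lemma NN_second: assumes sig: "\<sigma> > 0" shows "(\<integral>\<^sup>+t. ennreal (t^2) \<partial>NN \<sigma>) = ennreal (\<sigma>^2)"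
proof -
  have hb: "has_bochner_integral lborel (\<lambda>x. normal_density 0 \<sigma> x * (x - 0) ^ (2 * 1)) (fact (2 * 1) / ((2 / \<sigma>\<^sup>2)^1 * fact 1))"
    by (rule normal_moment_even) (rule sig)
  have val: "fact (2 * 1) / ((2 / \<sigma>\<^sup>2)^1 * fact 1) = \<sigma>^2" using sig by simp
  have hb': "has_bochner_integral lborel (\<lambda>x. normal_density 0 \<sigma> x * x^2) (\<sigma>^2)"
    using hb unfolding val by simp
  have "(\<integral>\<^sup>+t. ennreal (t^2) \<partial>NN \<sigma>) = (\<integral>\<^sup>+t. ennreal (normal_density 0 \<sigma> t) * ennreal (t^2) \<partial>lborel)"
    by (simp add: nn_integral_density)
  also have "\<dots> = (\<integral>\<^sup>+t. ennreal (normal_density 0 \<sigma> t * t^2) \<partial>lborel)"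
    by (simp add: ennreal_mult')
  also have "\<dots> = ennreal (\<sigma>^2)"
    using nn_integral_eq_integral[OF integrable.intros[OF hb']] has_bochner_integral_integral_eq[OF hb']
    by simp
  finally show ?thesis .
qed




lemma nd_le: assumes sig: "\<sigma> > 0" shows "normal_density 0 \<sigma> t \<le> 1 / (2*\<sigma>)"
proof -
  have "exp (-(t^2)/(2*\<sigma>^2)) \<le> 1" by simp
  moreover have "2*\<sigma> \<le> sqrt (2*pi*\<sigma>^2)"
  proof -
    have "(2*\<sigma>)^2 \<le> 2*pi*\<sigma>^2" using pi_gt3 sig by (simp add: power2_eq_square)
    then show ?thesis using sig by (metis real_le_rsqrt)
  qed
  moreover have "sqrt (2*pi*\<sigma>^2) > 0" using sig by simp
  ultimately have "1 / sqrt (2*pi*\<sigma>^2) * exp (-(t^2)/(2*\<sigma>^2)) \<le> 1 / (2*\<sigma>) * 1"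
    using sig by (intro mult_mono) (auto simp: divide_simps)
  then show ?thesis unfolding normal_density_def by simp
qed

lemma NN_interval:
  assumes sig: "\<sigma> > 0" and a: "a \<ge> 0"
  shows "(\<integral>\<^sup>+t. indicator {-a..a} t \<partial>NN \<sigma>) \<le> ennreal (a/\<sigma>)"
proof -
  have "(\<integral>\<^sup>+t. indicator {-a..a} t \<partial>NN \<sigma>) = (\<integral>\<^sup>+t. ennreal (normal_density 0 \<sigma> t) * indicator {-a..a} t \<partial>lborel)"
    by (simp add: emeasure_density)
  also have "\<dots> \<le> (\<integral>\<^sup>+t. ennreal (1/(2*\<sigma>)) * indicator {-a..a} t \<partial>lborel)"
    by (intro nn_integral_mono mult_right_mono) (auto intro: nd_le[OF sig] ennreal_leI)
  also have "\<dots> = ennreal (1/(2*\<sigma>)) * ennreal (2*a)"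
    using a by (simp add: nn_integral_cmult)
  also have "\<dots> = ennreal (a/\<sigma>)" using sig a by (simp add: ennreal_mult'[symmetric])
  finally show ?thesis .
qed

definition gI :: "real \<Rightarrow> real \<Rightarrow> ennreal" where
  "gI a b = (if \<bar>a\<bar> \<le> 3/2*b then 1 else 0)"

lemma gI_meas: "case_prod gI \<in> borel_measurable (borel \<Otimes>\<^sub>M borel)"
  unfolding gI_def split_beta' by measurable


lemma pt_aux:
  fixes \<gamma> t r :: real
  assumes gp: "\<gamma> > 0" and r: "r \<ge> 0" and h: "\<bar>\<gamma>*t\<bar> \<le> 3/2*(t^2+r)" and nt: "\<not> \<bar>t\<bar> \<le> 3*r/\<gamma>"
  shows "1 \<le> 9/\<gamma>^2 * t^2"
proof -
  have "3*r < \<gamma>*\<bar>t\<bar>" using nt gp by (simp add: le_divide_eq not_le mult.commute)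
  moreover have "\<gamma>*\<bar>t\<bar> \<le> 3/2*(t^2+r)" using h gp by (simp add: abs_mult)
  ultimately have a: "\<gamma>*\<bar>t\<bar> < 3*(\<bar>t\<bar>*\<bar>t\<bar>)" by (simp add: power2_eq_square)
  have tp: "\<bar>t\<bar> > 0" using a gp by (cases "t = 0") auto
  have "\<gamma> < 3*\<bar>t\<bar>" using a tp by (metis mult.assoc mult.commute mult_less_cancel_left_pos)
  then have "\<gamma>*\<gamma> < (3*\<bar>t\<bar>)*(3*\<bar>t\<bar>)" using gp by (intro mult_strict_mono) auto
  then have "\<gamma>^2 < 9*t^2" by (simp add: power2_eq_square algebra_simps)
  then show ?thesis using gp by (simp add: le_divide_eq)
qed

lemma inner_bound:
  assumes sig: "\<sigma> > 0" and gp: "\<gamma> > 0" and r: "r \<ge> 0"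
  shows "(\<integral>\<^sup>+t. gI (\<gamma>*t) (t^2 + r) \<partial>NN \<sigma>) \<le> ennreal (3*r/(\<gamma>*\<sigma>)) + ennreal (9*\<sigma>^2/\<gamma>^2)"
proof -
  have pt: "gI (\<gamma>*t) (t^2 + r) \<le> indicator {-(3*r/\<gamma>)..3*r/\<gamma>} t + ennreal (9/\<gamma>^2) * ennreal (t^2)" for t
  proof (cases "\<bar>\<gamma>*t\<bar> \<le> 3/2*(t^2+r)")
    case True
    show ?thesis
    proof (cases "\<bar>t\<bar> \<le> 3*r/\<gamma>")
      case True
      then show ?thesis by (simp add: gI_def indicator_def abs_le_iff)
    next
      case False
      have "1 \<le> 9/\<gamma>^2 * t^2" by (rule pt_aux[OF gp r \<open>\<bar>\<gamma>*t\<bar> \<le> 3/2*(t^2+r)\<close> False])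
      then have "1 \<le> ennreal (9/\<gamma>^2) * ennreal (t^2)"
        by (simp add: ennreal_mult'[symmetric] ennreal_1[symmetric] del: ennreal_1)
      then show ?thesis by (simp add: gI_def add_increasing)
    qed
  qed (simp add: gI_def)
  have "(\<integral>\<^sup>+t. gI (\<gamma>*t) (t^2 + r) \<partial>NN \<sigma>)
      \<le> (\<integral>\<^sup>+t. indicator {-(3*r/\<gamma>)..3*r/\<gamma>} t + ennreal (9/\<gamma>^2) * ennreal (t^2) \<partial>NN \<sigma>)"
    by (intro nn_integral_mono pt)
  also have "\<dots> = (\<integral>\<^sup>+t. indicator {-(3*r/\<gamma>)..3*r/\<gamma>} t \<partial>NN \<sigma>) + ennreal (9/\<gamma>^2) * (\<integral>\<^sup>+t. ennreal (t^2) \<partial>NN \<sigma>)"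
    by (subst nn_integral_add) (auto simp: nn_integral_cmult)
  also have "\<dots> \<le> ennreal (3*r/\<gamma>/\<sigma>) + ennreal (9/\<gamma>^2) * ennreal (\<sigma>^2)"
    unfolding NN_second[OF sig] using r gp by (intro add_mono NN_interval[OF sig]) auto
  also have "\<dots> = ennreal (3*r/(\<gamma>*\<sigma>)) + ennreal (9*\<sigma>^2/\<gamma>^2)"
    by (simp add: ennreal_mult'[symmetric])
  finally show ?thesis .
qed

lemma Sq_moment:
  assumes sig: "\<sigma> > 0"
  shows "(\<integral>\<^sup>+x. ennreal (Sq k x) \<partial>PiM {..<k} (\<lambda>_. NN \<sigma>)) = ennreal (real k * \<sigma>^2)"
proof -
  interpret P: product_prob_space "\<lambda>_::nat. NN \<sigma>" "{..<k}"
    by (rule product_prob_spaceI) (rule NN_prob[OF sig])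
  have comp: "(\<integral>\<^sup>+x. ennreal ((x i)^2) \<partial>PiM {..<k} (\<lambda>_. NN \<sigma>)) = ennreal (\<sigma>^2)" if "i < k" for i
  proof -
    have "(\<integral>\<^sup>+x. ennreal ((x i)^2) \<partial>PiM {..<k} (\<lambda>_. NN \<sigma>))
        = (\<integral>\<^sup>+t. ennreal (t^2) \<partial>distr (PiM {..<k} (\<lambda>_. NN \<sigma>)) (NN \<sigma>) (\<lambda>\<omega>. \<omega> i))"
      by (subst nn_integral_distr) (auto intro: measurable_component_singleton simp: that)
    also have "\<dots> = (\<integral>\<^sup>+t. ennreal (t^2) \<partial>NN \<sigma>)"
      using P.PiM_component[of i] that by simp
    finally show ?thesis using NN_second[OF sig] by simp
  qed
  have "(\<integral>\<^sup>+x. ennreal (Sq k x) \<partial>PiM {..<k} (\<lambda>_. NN \<sigma>))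
      = (\<integral>\<^sup>+x. (\<Sum>i<k. ennreal ((x i)^2)) \<partial>PiM {..<k} (\<lambda>_. NN \<sigma>))"
    unfolding Sq_def by (simp add: sum_ennreal)
  also have "\<dots> = (\<Sum>i<k. \<integral>\<^sup>+x. ennreal ((x i)^2) \<partial>PiM {..<k} (\<lambda>_. NN \<sigma>))"
    by (rule nn_integral_sum) measurable
  also have "\<dots> = (\<Sum>i<k. ennreal (\<sigma>^2))" by (simp add: comp)
  also have "\<dots> = ennreal (real k * \<sigma>^2)" by (simp add: ennreal_mult ennreal_of_nat_eq_real_of_nat)
  finally show ?thesis .
qed



lemma ln2_ge: "ln (2::real) \<ge> 1/2"
proof -
  have "ln (1/2::real) \<le> 1/2 - 1" by (rule ln_le_minus_one) simp
  moreover have "ln (1/2::real) = - ln 2" by (simp add: ln_div)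
  ultimately show ?thesis by simp
qed

lemma vnorm_sq: "(vnorm m X)^2 = Sq m X"
  unfolding vnorm_def Sq_def by (simp add: sum_nonneg)

lemma Sq_zero: "Sq m X = 0 \<Longrightarrow> vinner m X u = 0"
proof -
  assume h: "Sq m X = 0"
  have "\<forall>i\<in>{..<m}. (X i)^2 = 0" using h unfolding Sq_def
    by (subst sum_nonneg_eq_0_iff[symmetric]) auto
  then show ?thesis unfolding vinner_def by simp
qed

lemma integrand_bound:
  assumes w: "-1 \<le> w" "w \<le> 1" and lam: "lam > 0" and B: "lam * B^2 \<le> Cl" "B \<ge> 0"
  shows "exp (lam * delta_sq m w u X) * indicator {X. q_step m w u X = 0} X
           * indicator {X. vnorm m X \<le> B} X
       \<le> exp Cl * (if \<bar>vinner m X u\<bar> \<le> 3/2 * Sq m X then 1 else 0)"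
proof (cases "q_step m w u X = 0 \<and> vnorm m X \<le> B")
  case False
  then show ?thesis by (auto simp: indicator_def)
next
  case True
  have "0 \<le> lam * B^2" using lam by simp
  then have Cl0: "Cl \<ge> 0" using B(1) by linarith
  let ?n = "Sq m X"
  let ?V = "vinner m X u"
  have n0: "?n \<ge> 0" unfolding Sq_def by (simp add: sum_nonneg)
  have "(vnorm m X)^2 \<le> B^2"
    by (rule power_mono) (use True in simp, simp add: vnorm_def sum_nonneg)
  then have nB: "?n \<le> B^2" by (simp add: vnorm_sq)
  have q: "q_step m w u X = 0" using True by simp
  have main: "lam * delta_sq m w u X \<le> Cl \<and> \<bar>?V\<bar> \<le> 3/2 * ?n"
  proof (cases "?n = 0")
    case True
    then have "?V = 0" by (rule Sq_zero)
    then show ?thesis using True Cl0 q unfolding delta_sq_def vnorm_sq by simp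
  next
    case False
    then have np: "?n > 0" using n0 by simp
    define s where "s = ?V / ?n"
    have Vs: "?V = s * ?n" unfolding s_def using np by simp
    have "Q (w + s) = 0" using q unfolding q_step_def vnorm_sq s_def .
    then have ws: "-1/2 \<le> w + s" "w + s \<le> 1/2" unfolding Q_def by (auto split: if_splits)
    then have "\<bar>s\<bar> \<le> 3/2" using w by simp
    then have "\<bar>?V\<bar> \<le> 3/2 * ?n" unfolding Vs using np by (simp add: abs_mult)
    moreover have "delta_sq m w u X = ?n * ((w+s)^2 - s^2)"
      unfolding delta_sq_def q vnorm_sq Vs by (simp add: power2_eq_square algebra_simps)
    moreover have "(w+s)^2 - s^2 \<le> 1"
    proof -
      have "\<bar>w+s\<bar> \<le> \<bar>1/2\<bar>" using ws by (simp only: abs_le_iff) simp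
      then have "(w+s)^2 \<le> (1/2)^2" by (simp only: abs_le_square_iff)
      moreover have "(1/2::real)^2 = 1/4" by (simp add: power2_eq_square)
      moreover have "0 \<le> s^2" by simp
      ultimately show ?thesis by linarith
    qed
    ultimately have d: "delta_sq m w u X \<le> ?n" and V: "\<bar>?V\<bar> \<le> 3/2 * ?n"
      using mult_left_mono[of "(w+s)^2 - s^2" 1 ?n] np by auto
    have "lam * delta_sq m w u X \<le> lam * ?n" using d lam by simp
    also have "\<dots> \<le> lam * B^2" using nB lam by simp
    finally show ?thesis using V B(1) by linarith
  qed
  then show ?thesis using True by (simp add: indicator_def)
qed

lemma final_ineq:
  fixes \<sigma> L \<epsilon> \<rho> E \<gamma> :: real
  assumes sig: "\<sigma> > 0" and m: "m \<ge> (1::nat)" and L: "L \<ge> 1/2" and e: "0 < \<epsilon>" "\<epsilon> \<le> 1"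
    and r: "0 < \<rho>" "\<rho> < 1" and E: "E \<ge> 1" and k: "k \<le> m"
    and g: "\<gamma> \<ge> 40 * E * \<sigma> * real m * L / (\<rho> * \<epsilon>)"
  shows "E * (3 * real k * \<sigma> / \<gamma> + 9 * \<sigma>^2 / \<gamma>^2) \<le> \<rho>"
proof -
  define b where "b = 40 * E * \<sigma> * real m * L / (\<rho> * \<epsilon>)"
  have bpos: "b > 0" unfolding b_def using sig m L e r E by (intro divide_pos_pos mult_pos_pos) auto
  have gp: "\<gamma> > 0" using g bpos unfolding b_def by simp
  define \<delta> where "\<delta> = \<sigma> / \<gamma>"
  have d0: "\<delta> > 0" unfolding \<delta>_def using sig gp by simp
  have "\<delta> \<le> \<sigma> / b" unfolding \<delta>_def
  proof (rule divide_left_mono)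
    show "b \<le> \<gamma>" using g unfolding b_def .
    show "0 \<le> \<sigma>" using sig by simp
    show "0 < \<gamma> * b" using gp bpos by simp
  qed
  also have "\<sigma> / b = \<rho> * \<epsilon> / (40 * E * real m * L)" unfolding b_def using sig by (simp add: field_simps)
  finally have d1: "\<delta> \<le> \<rho> * \<epsilon> / (40 * E * real m * L)" .
  have den: "40 * E * real m * L \<ge> 20"
  proof -
    have "40 * E * real m * L \<ge> 40 * 1 * 1 * (1/2)" using E m L
      by (intro mult_mono) auto
    then show ?thesis by simp
  qed
  have "\<rho> * \<epsilon> \<le> 1" using r e by (simp add: mult_le_one)
  then have "\<delta> \<le> 1 / 20" using d1 den
    by (smt (verit) divide_le_cancel frac_le zero_le_mult_iff r(1) e(1))
  then have "9 * \<delta>^2 \<le> \<delta>" using d0 by (simp add: power2_eq_square)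
  moreover have "\<delta> \<le> real m * \<delta>" using m d0 by simp
  moreover have "3 * real k * \<delta> \<le> 3 * real m * \<delta>" using k d0 by simp
  ultimately have s: "3 * real k * \<delta> + 9 * \<delta>^2 \<le> 4 * real m * \<delta>" by simp
  have "3 * real k * \<sigma> / \<gamma> + 9 * \<sigma>^2 / \<gamma>^2 = 3 * real k * \<delta> + 9 * \<delta>^2"
    unfolding \<delta>_def by (simp add: power_divide)
  also have "\<dots> \<le> 4 * real m * \<delta>" by (rule s)
  also have "\<dots> \<le> 4 * real m * (\<rho> * \<epsilon> / (40 * E * real m * L))" by (rule mult_left_mono[OF d1]) simp
  also have "\<dots> = \<rho> * \<epsilon> / (10 * E * L)" using m by (simp add: field_simps)
  finally have F: "3 * real k * \<sigma> / \<gamma> + 9 * \<sigma>^2 / \<gamma>^2 \<le> \<rho> * \<epsilon> / (10 * E * L)" .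
  have "E * (3 * real k * \<sigma> / \<gamma> + 9 * \<sigma>^2 / \<gamma>^2) \<le> E * (\<rho> * \<epsilon> / (10 * E * L))"
    using F E by (intro mult_left_mono) auto
  also have "\<dots> = \<rho> * \<epsilon> / (10 * L)" using E by simp
  also have "\<dots> \<le> \<rho> * 1 / (10 * (1/2))" using r e L
    by (intro frac_le mult_mono) auto
  also have "\<dots> \<le> \<rho>" using r by simp
  finally show ?thesis .
qed



lemma main_bound:
  assumes m: "m \<ge> 1" and sig: "\<sigma> > 0" and N0: "N\<^sub>0 \<ge> (2::nat)" and e: "\<epsilon> > 0"
    and w: "w \<in> {-1..1}" and inf: "infdist w {-1, 0, 1} \<ge> \<epsilon>"
    and Cs: "C_sup > 0" and Cl: "0 < C_lam" and r: "0 < \<rho>" "\<rho> < 1"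
    and lam_def: "lam = C_lam / (C_sup\<^sup>2 * \<sigma>\<^sup>2 * real m * ln (real N\<^sub>0))"
    and \<beta>_def: "\<beta> = 40 * exp C_lam * \<sigma> * real m * ln (real N\<^sub>0) / (\<rho> * \<epsilon>)"
  shows "(\<integral>\<^sup>+ X. ennreal (exp (lam * delta_sq m w u X)
                     * indicator {X. q_step m w u X = 0} X
                     * indicator {X. vnorm m X \<le> C_sup * \<sigma> * sqrt (real m * ln (real N\<^sub>0))} X
                     * (if vnorm m u \<ge> \<beta> then 1 else 0)) \<partial>gauss_vec m \<sigma>)
         \<le> ennreal \<rho>"
proof (cases "vnorm m u \<ge> \<beta>")
  case False
  then show ?thesis by simp
next
  case True
  define L where "L = ln (real N\<^sub>0)"
  have L2: "L \<ge> 1/2"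
  proof -
    have "ln (2::real) \<le> ln (real N\<^sub>0)" using N0 by (intro ln_mono) auto
    then show ?thesis using ln2_ge unfolding L_def by linarith
  qed
  have Lp: "L > 0" using L2 by simp
  define B where "B = C_sup * \<sigma> * sqrt (real m * L)"
  have B0: "B \<ge> 0" unfolding B_def using Cs sig Lp by simp
  have den: "C_sup\<^sup>2 * \<sigma>\<^sup>2 * real m * L > 0" using Cs sig Lp m by simp
  have B2: "B^2 = C_sup\<^sup>2 * \<sigma>\<^sup>2 * real m * L"
    unfolding B_def using Lp by (simp add: power_mult_distrib)
  have lampos: "lam > 0" unfolding lam_def L_def[symmetric] using Cl den by simp
  have lamB: "lam * B^2 \<le> C_lam" unfolding lam_def L_def[symmetric] B2 using den Cl by simp
  have w1: "-1 \<le> w" "w \<le> 1" using w by auto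
  have e1: "\<epsilon> \<le> 1"
  proof -
    have "infdist w {-1, 0, 1} \<le> dist w 0" by (rule infdist_le) simp
    then show ?thesis using inf w1 by (simp add: dist_real_def)
  qed
  obtain k where k: "m = Suc k" using m by (cases m) auto
  define \<gamma> where "\<gamma> = vnorm m u"
  have \<beta>pos: "\<beta> > 0" unfolding \<beta>_def L_def[symmetric] using sig m Lp r e by (intro divide_pos_pos mult_pos_pos) auto
  have g\<beta>: "\<gamma> \<ge> \<beta>" using True unfolding \<gamma>_def .
  have gpos: "\<gamma> > 0" using g\<beta> \<beta>pos by simp
  have \<gamma>eq: "sqrt (Sq (Suc k) u) = \<gamma>" unfolding \<gamma>_def k vnorm_def Sq_def ..
  let ?G = "\<lambda>j. PiM {..<j} (\<lambda>_. NN \<sigma>)"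
  interpret Gk: prob_space "?G k" by (intro prob_space_PiM NN_prob sig)
  have step1: "(\<integral>\<^sup>+ X. ennreal (exp (lam * delta_sq m w u X)
                     * indicator {X. q_step m w u X = 0} X
                     * indicator {X. vnorm m X \<le> C_sup * \<sigma> * sqrt (real m * ln (real N\<^sub>0))} X
                     * (if vnorm m u \<ge> \<beta> then 1 else 0)) \<partial>gauss_vec m \<sigma>)
     \<le> (\<integral>\<^sup>+ X. ennreal (exp C_lam) * gI (vinner m X u) (Sq m X) \<partial>?G m)"
    unfolding gauss_vec_eq
  proof (rule nn_integral_mono)
    fix X
    have "exp (lam * delta_sq m w u X) * indicator {X. q_step m w u X = 0} X
           * indicator {X. vnorm m X \<le> B} X
       \<le> exp C_lam * (if \<bar>vinner m X u\<bar> \<le> 3/2 * Sq m X then 1 else 0)"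
      by (rule integrand_bound[OF w1 lampos lamB B0])
    then show "ennreal (exp (lam * delta_sq m w u X)
                     * indicator {X. q_step m w u X = 0} X
                     * indicator {X. vnorm m X \<le> C_sup * \<sigma> * sqrt (real m * ln (real N\<^sub>0))} X
                     * (if vnorm m u \<ge> \<beta> then 1 else 0))
          \<le> ennreal (exp C_lam) * gI (vinner m X u) (Sq m X)"
    proof -
      have "ennreal (exp (lam * delta_sq m w u X)
                     * indicator {X. q_step m w u X = 0} X
                     * indicator {X. vnorm m X \<le> C_sup * \<sigma> * sqrt (real m * ln (real N\<^sub>0))} X
                     * (if vnorm m u \<ge> \<beta> then 1 else 0))
          \<le> ennreal (exp C_lam * (if \<bar>vinner m X u\<bar> \<le> 3/2 * Sq m X then 1 else 0))"
        using True \<open>_ \<le> exp C_lam * _\<close> unfolding B_def L_def by (intro ennreal_leI) simp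
      also have "\<dots> = ennreal (exp C_lam) * gI (vinner m X u) (Sq m X)"
        unfolding gI_def by simp
      finally show ?thesis .
    qed
  qed
  also have "\<dots> = ennreal (exp C_lam) * (\<integral>\<^sup>+ X. gI (vinner m X u) (Sq m X) \<partial>?G m)"
    by (rule nn_integral_cmult) (rule meas2[OF gI_meas]; measurable)
  also have "(\<integral>\<^sup>+ X. gI (vinner m X u) (Sq m X) \<partial>?G m)
      = (\<integral>\<^sup>+x. \<integral>\<^sup>+t. gI (\<gamma> * t) (t^2 + Sq k x) \<partial>NN \<sigma> \<partial>?G k)"
    unfolding k rot_final[OF sig gI_meas] \<gamma>eq ..
  also have "\<dots> \<le> (\<integral>\<^sup>+x. ennreal (3/(\<gamma>*\<sigma>)) * ennreal (Sq k x) + ennreal (9*\<sigma>^2/\<gamma>^2) \<partial>?G k)"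
  proof (rule nn_integral_mono)
    fix x
    have Sq0: "Sq k x \<ge> 0" unfolding Sq_def by (simp add: sum_nonneg)
    have "ennreal (3 * Sq k x / (\<gamma> * \<sigma>)) = ennreal (3/(\<gamma>*\<sigma>)) * ennreal (Sq k x)"
      using gpos sig Sq0 by (simp add: ennreal_mult'[symmetric])
    then show "(\<integral>\<^sup>+t. gI (\<gamma> * t) (t^2 + Sq k x) \<partial>NN \<sigma>)
        \<le> ennreal (3/(\<gamma>*\<sigma>)) * ennreal (Sq k x) + ennreal (9*\<sigma>^2/\<gamma>^2)"
      using inner_bound[OF sig gpos Sq0] by simp
  qed
  also have "\<dots> = ennreal (3/(\<gamma>*\<sigma>)) * ennreal (real k * \<sigma>^2) + ennreal (9*\<sigma>^2/\<gamma>^2)"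
    by (subst nn_integral_add) (auto simp: nn_integral_cmult Sq_moment[OF sig] Gk.emeasure_space_1)
  also have "\<dots> = ennreal (3 * real k * \<sigma> / \<gamma> + 9 * \<sigma>^2 / \<gamma>^2)"
  proof -
    have a: "ennreal (3/(\<gamma>*\<sigma>)) * ennreal (real k * \<sigma>^2) = ennreal (3 * real k * \<sigma> / \<gamma>)"
    proof -
      have "3/(\<gamma>*\<sigma>) * (real k * \<sigma>^2) = 3 * real k * \<sigma> / \<gamma>"
        using sig gpos by (simp add: power2_eq_square field_simps)
      moreover have "ennreal (3/(\<gamma>*\<sigma>)) * ennreal (real k * \<sigma>^2) = ennreal (3/(\<gamma>*\<sigma>) * (real k * \<sigma>^2))"
        using sig gpos by (intro ennreal_mult[symmetric]) auto
      ultimately show ?thesis by simp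
    qed
    show ?thesis unfolding a using sig gpos by (intro ennreal_plus[symmetric]) auto
  qed
  finally have "(\<integral>\<^sup>+ X. ennreal (exp (lam * delta_sq m w u X)
                     * indicator {X. q_step m w u X = 0} X
                     * indicator {X. vnorm m X \<le> C_sup * \<sigma> * sqrt (real m * ln (real N\<^sub>0))} X
                     * (if vnorm m u \<ge> \<beta> then 1 else 0)) \<partial>gauss_vec m \<sigma>)
     \<le> ennreal (exp C_lam) * ennreal (3 * real k * \<sigma> / \<gamma> + 9 * \<sigma>^2 / \<gamma>^2)"
    by (simp add: mult_left_mono)
  also have "\<dots> = ennreal (exp C_lam * (3 * real k * \<sigma> / \<gamma> + 9 * \<sigma>^2 / \<gamma>^2))"
    by (rule ennreal_mult'[symmetric]) simp
  also have "\<dots> \<le> ennreal \<rho>"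
  proof (rule ennreal_leI, rule final_ineq[OF sig m L2 e e1 r])
    show "1 \<le> exp C_lam" using Cl by simp
    show "k \<le> m" using k by simp
    show "\<gamma> \<ge> 40 * exp C_lam * \<sigma> * real m * L / (\<rho> * \<epsilon>)" using g\<beta> unfolding \<beta>_def L_def .
  qed
  finally show ?thesis .
qed


theorem lemma8:
  fixes c_norm :: real
  assumes "gauss_norm_conc c_norm"
  shows "\<exists>C>0. \<forall>(m::nat) (\<sigma>::real) (u::nat \<Rightarrow> real) (w::real) (\<epsilon>::real) (N\<^sub>0::nat)
                 (C_sup::real) (C_lam::real) (\<rho>::real).
     m \<ge> 1 \<and> \<sigma> > 0 \<and> N\<^sub>0 \<ge> 2 \<and> \<epsilon> > 0 \<and> w \<in> {-1..1} \<and> infdist w {-1, 0, 1} \<ge> \<epsilon> \<and>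
     C_sup > 0 \<and> 0 < C_lam \<and> C_lam < c_norm / 12 \<and> 0 < \<rho> \<and> \<rho> < 1 \<longrightarrow>
     (let lam = C_lam / (C_sup\<^sup>2 * \<sigma>\<^sup>2 * real m * ln (real N\<^sub>0));
          \<beta> = C * exp C_lam * \<sigma> * real m * ln (real N\<^sub>0) / (\<rho> * \<epsilon>)
      in (\<integral>\<^sup>+ X. ennreal (exp (lam * delta_sq m w u X)
                     * indicator {X. q_step m w u X = 0} X
                     * indicator {X. vnorm m X \<le> C_sup * \<sigma> * sqrt (real m * ln (real N\<^sub>0))} X
                     * (if vnorm m u \<ge> \<beta> then 1 else 0)) \<partial>gauss_vec m \<sigma>)
         \<le> ennreal \<rho>)"
  proof (intro exI[of _ "40::real"] conjI allI impI)
  show "(40::real) > 0" by simp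
next
  fix m :: nat and \<sigma> :: real and u :: "nat \<Rightarrow> real" and w \<epsilon> :: real and N\<^sub>0 :: nat
    and C_sup C_lam \<rho> :: real
  assume H: "m \<ge> 1 \<and> \<sigma> > 0 \<and> N\<^sub>0 \<ge> 2 \<and> \<epsilon> > 0 \<and> w \<in> {-1..1} \<and> infdist w {-1, 0, 1} \<ge> \<epsilon> \<and>
     C_sup > 0 \<and> 0 < C_lam \<and> C_lam < c_norm / 12 \<and> 0 < \<rho> \<and> \<rho> < 1"
  show "let lam = C_lam / (C_sup\<^sup>2 * \<sigma>\<^sup>2 * real m * ln (real N\<^sub>0));
          \<beta> = 40 * exp C_lam * \<sigma> * real m * ln (real N\<^sub>0) / (\<rho> * \<epsilon>)
      in (\<integral>\<^sup>+ X. ennreal (exp (lam * delta_sq m w u X)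
                     * indicator {X. q_step m w u X = 0} X
                     * indicator {X. vnorm m X \<le> C_sup * \<sigma> * sqrt (real m * ln (real N\<^sub>0))} X
                     * (if vnorm m u \<ge> \<beta> then 1 else 0)) \<partial>gauss_vec m \<sigma>)
         \<le> ennreal \<rho>"
    unfolding Let_def
    by (rule main_bound[OF _ _ _ _ _ _ _ _ _ _ refl refl]) (use H in auto)
qed

end
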